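(* Let $0<\alpha_\mathcal{A}<1$, $0\le\epsilon<1$, and suppose every non-adversarial pool has share $\alpha_i<0.4302$. Consider the Markov chain on the fork states $(0,0),(1,0),(2,0),(1,1)$ describing the selfish mining strategy $\pi^{\mathrm{selfish}}$, where each step is the mining of one new block, with the following transitions and accounting (adversarial canonical blocks $A$, bribe units paid $C$, total blocks added to the canonical chain $B$): (i) from $(0,0)$: with probability $\alpha_\mathcal{A}$ go to $(1,0)$ ($A=C=B=0$); with probability $1-\alpha_\mathcal{A}$ stay at $(0,0)$ ($A=C=0$, $B=1$); (ii) from $(1,0)$: with probability $\alpha_\mathcal{A}$ go to $(2,0)$; with probability $1-\alpha_\mathcal{A}$ go to $(1,1)$ (in both cases $A=C=B=0$); (iii) from $(2,0)$: with probability $\alpha_\mathcal{A}$ stay at $(2,0)$ ($A=1$, $C=0$, $B=1$); with probability $1-\alpha_\mathcal{A}$ go to $(0,0)$ ($A=2$, $C=0$, $B=2$); (iv) from $(1,1)$, always going to $(0,0)$ with $B=2$: with probability $\alpha_\mathcal{A}$, $A=2$, $C=0$; with probability $1-\alpha_\mathcal{A}-\beta_\mathcal{A}$, $A=1$, $C=\epsilon$; with probability $\beta_\mathcal{A}$, $A=0$, $C=0$. Let $\mathbb{E}_\pi$ denote expectation of the one-step quantities under the stationary distribution $\pi$ of this chain, and define the time-averaged profit after difficulty adjustment as $\mathrm{Profit}(\pi^{\mathrm{selfish}})=\lambda R\,\frac{\mathbb{E}_\pi[A]-\mathbb{E}_\pi[C]}{\mathbb{E}_\pi[B]}$, where $\lambda>0$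 is the block rate of the canonical chain. Then $\mathrm{Profit}(\pi^{\mathrm{selfish}})>\alpha_\mathcal{A}\lambda R$ (the honest-mining profit) if (and in fact iff) $$\beta_\mathcal{A}<\frac{\alpha_\mathcal{A}-\epsilon(1-\alpha_\mathcal{A})^2}{(1-\alpha_\mathcal{A})(1-\epsilon)}.$$
   Context: Model: there is an adversarial mining pool $p_\mathcal{A}$ with mining-power share $\alpha_\mathcal{A}$ and non-adversarial (petty-compliant) pools $p_1,\dots,p_N$ with shares $\alpha_1,\dots,\alpha_N>0$, $\alpha_\mathcal{A}+\sum_i\alpha_i=1$; each new block is found by each pool with probability equal to its share. Block reward is a fixed $R>0$; a normalized bribe $\mathrm{br}$ means a payment of $\mathrm{br}\cdot R$; $\epsilon$ is the incentivizing factor of the environment. The residual centralization factor of the adversary is $\beta_\mathcal{A}=\frac{\sum_{i=1}^N\alpha_i^2}{1-\alpha_\mathcal{A}}$. The state $(l_\mathcal{A},l_\mathcal{R})$ records the lengths of the hidden adversarial fork and the public non-adversarial fork. In state $(1,1)$ the adversary has published its block with a normalized bribe $\epsilon$ on top; the pool that mined the competing block keeps mining on its own block and all other pools mine on the adversarial block; the bribe is paid only if a non-adversarial pool extends the adversarial block. The share bound $0.4302$ is the paper's condition guaranteeing that a pool whose one-block fork falls one block behind adopts the longer fork. *)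

theory Defs
  imports Complex_Main
begin

text \<open>Fork states (l_A, l_R) of the selfish mining chain.\<close>
datatype fstate = S00 | S10 | S20 | S11

definition fstates :: "fstate set" where
  "fstates = {S00, S10, S20, S11}"

definition residual_centralization :: "real \<Rightarrow> (nat \<Rightarrow> real) \<Rightarrow> nat \<Rightarrow> real" where
  "residual_centralization aA alpha N = (\<Sum>i=1..N. (alpha i)^2) / (1 - aA)"

text \<open>One-step transitions of pi^selfish: list of (probability, next state, A, C, B),
  A = adversarial canonical blocks, C = bribe units paid, B = canonical blocks added.\<close>
fun selfish_trans :: "real \<Rightarrow> real \<Rightarrow> real \<Rightarrow> fstate \<Rightarrow> (real \<times> fstate \<times> real \<times> real \<times> real) list" where
  "selfish_trans aA beta eps S00 = [(aA, S10, 0, 0, 0), (1 - aA, S00, 0, 0, 1)]"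
| "selfish_trans aA beta eps S10 = [(aA, S20, 0, 0, 0), (1 - aA, S11, 0, 0, 0)]"
| "selfish_trans aA beta eps S20 = [(aA, S20, 1, 0, 1), (1 - aA, S00, 2, 0, 2)]"
| "selfish_trans aA beta eps S11 = [(aA, S00, 2, 0, 2), (1 - aA - beta, S00, 1, eps, 2), (beta, S00, 0, 0, 2)]"

definition trans_prob :: "real \<Rightarrow> real \<Rightarrow> real \<Rightarrow> fstate \<Rightarrow> fstate \<Rightarrow> real" where
  "trans_prob aA beta eps s s' =
     sum_list (map (\<lambda>(p, t, a, c, b). if t = s' then p else 0) (selfish_trans aA beta eps s))"

definition stationary :: "real \<Rightarrow> real \<Rightarrow> real \<Rightarrow> (fstate \<Rightarrow> real) \<Rightarrow> bool" where
  "stationary aA beta eps \<pi> \<longleftrightarrow>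
     (\<forall>s. 0 \<le> \<pi> s) \<and> (\<Sum>s\<in>fstates. \<pi> s) = 1 \<and>
     (\<forall>s'. (\<Sum>s\<in>fstates. \<pi> s * trans_prob aA beta eps s s') = \<pi> s')"

definition exp_A :: "real \<Rightarrow> real \<Rightarrow> real \<Rightarrow> (fstate \<Rightarrow> real) \<Rightarrow> real" where
  "exp_A aA beta eps \<pi> = (\<Sum>s\<in>fstates. \<pi> s *
     sum_list (map (\<lambda>(p, t, a, c, b). p * a) (selfish_trans aA beta eps s)))"

definition exp_C :: "real \<Rightarrow> real \<Rightarrow> real \<Rightarrow> (fstate \<Rightarrow> real) \<Rightarrow> real" where
  "exp_C aA beta eps \<pi> = (\<Sum>s\<in>fstates. \<pi> s *
     sum_list (map (\<lambda>(p, t, a, c, b). p * c) (selfish_trans aA beta eps s)))"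

definition exp_B :: "real \<Rightarrow> real \<Rightarrow> real \<Rightarrow> (fstate \<Rightarrow> real) \<Rightarrow> real" where
  "exp_B aA beta eps \<pi> = (\<Sum>s\<in>fstates. \<pi> s *
     sum_list (map (\<lambda>(p, t, a, c, b). p * b) (selfish_trans aA beta eps s)))"

definition selfish_profit :: "real \<Rightarrow> real \<Rightarrow> real \<Rightarrow> real \<Rightarrow> real \<Rightarrow> (fstate \<Rightarrow> real) \<Rightarrow> real" where
  "selfish_profit lam R aA beta eps \<pi> =
     lam * R * (exp_A aA beta eps \<pi> - exp_C aA beta eps \<pi>) / exp_B aA beta eps \<pi>"

end

theory Submission
  imports Defs
begin

lemma sumf: "(\<Sum>s\<in>fstates. f s) = f S00 + f S10 + f S20 + (f S11::real)"
  by (simp add: fstates_def)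

lemma main:
  fixes a b eps lam R :: real and \<pi> :: "fstate \<Rightarrow> real"
  assumes a0: "0 < a" and a1: "a < 1" and e1: "eps < 1" and l: "0 < lam" and r: "0 < R"
    and st: "stationary a b eps \<pi>"
  shows "selfish_profit lam R a b eps \<pi> > a * lam * R
     \<longleftrightarrow> b < (a - eps * (1 - a)^2) / ((1 - a) * (1 - eps))"
proof -
  have nn: "\<And>s. 0 \<le> \<pi> s" and s1: "\<pi> S00 + \<pi> S10 + \<pi> S20 + \<pi> S11 = 1"
    and eq: "\<And>s'. (\<Sum>s\<in>fstates. \<pi> s * trans_prob a b eps s s') = \<pi> s'"
    using st unfolding stationary_def sumf by auto
  have e10: "\<pi> S10 = a * \<pi> S00" using eq[of S10] by (simp add: sumf trans_prob_def algebra_simps)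
  have e20: "\<pi> S20 = a * \<pi> S10 + a * \<pi> S20" using eq[of S20] by (simp add: sumf trans_prob_def algebra_simps)
  have e11: "\<pi> S11 = (1 - a) * \<pi> S10" using eq[of S11] by (simp add: sumf trans_prob_def algebra_simps)
  define p where "p = \<pi> S00"
  have h20: "\<pi> S20 = a^2 / (1-a) * p" using e20 e10 a1 unfolding p_def
    by (simp add: field_simps power2_eq_square)
  have h10: "\<pi> S10 = a * p" using e10 p_def by simp
  have h11: "\<pi> S11 = (1-a) * a * p" using e11 h10 by simp
  have pp: "p > 0"
  proof (rule ccontr)
    assume "\<not> p > 0"
    with nn[of S00] have "p = 0" unfolding p_def by simp
    thus False using s1 h20 h10 h11 p_def by simp
  qed
  have EA: "exp_A a b eps \<pi> = \<pi> S20 * (2 - a) + \<pi> S11 * (1 + a - b)"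
    by (simp add: exp_A_def sumf algebra_simps)
  have EC: "exp_C a b eps \<pi> = \<pi> S11 * eps * (1 - a - b)"
    by (simp add: exp_C_def sumf algebra_simps)
  have EB: "exp_B a b eps \<pi> = p * (1-a) + \<pi> S20 * (2 - a) + 2 * \<pi> S11"
    by (simp add: exp_B_def sumf algebra_simps p_def)
  have Bpos: "exp_B a b eps \<pi> > 0"
    unfolding EB h20 h11 using pp a0 a1 by (intro add_pos_pos add_pos_nonneg) auto
  have key: "exp_A a b eps \<pi> - exp_C a b eps \<pi> - a * exp_B a b eps \<pi>
     = a * p * (a - (1-a)*(1-eps)*b - eps*(1-a)^2)"
  proof -
    have hx: "(1-a) * \<pi> S20 = a^2 * p" using h20 a1 by simp
    have "exp_A a b eps \<pi> - exp_C a b eps \<pi> - a * exp_B a b eps \<pi>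
       - a * p * (a - (1-a)*(1-eps)*b - eps*(1-a)^2) = (2-a) * ((1-a) * \<pi> S20 - a^2 * p)"
      unfolding EA EC EB h11 by (simp add: algebra_simps power2_eq_square)
    thus ?thesis using hx by simp
  qed
  have "selfish_profit lam R a b eps \<pi> > a * lam * R \<longleftrightarrow>
        lam * R * (exp_A a b eps \<pi> - exp_C a b eps \<pi>) > lam * R * (a * exp_B a b eps \<pi>)"
    unfolding selfish_profit_def using Bpos by (simp add: field_simps)
  also have "\<dots> \<longleftrightarrow> exp_A a b eps \<pi> - exp_C a b eps \<pi> - a * exp_B a b eps \<pi> > 0"
    using l r by simp
  also have "\<dots> \<longleftrightarrow> a - (1-a)*(1-eps)*b - eps*(1-a)^2 > 0"
    unfolding key using mult_pos_pos[OF a0 pp] zero_less_mult_pos by (metis mult_pos_pos)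
  also have "\<dots> \<longleftrightarrow> b < (a - eps * (1 - a)^2) / ((1 - a) * (1 - eps))"
  proof -
    have d: "(1 - a) * (1 - eps) > 0" using a1 e1 by simp
    show ?thesis unfolding pos_less_divide_eq[OF d] by (simp add: algebra_simps)
  qed
  finally show ?thesis .
qed

theorem theorem1:
  fixes aA eps lam R :: real and alpha :: "nat \<Rightarrow> real" and N :: nat
    and \<pi> :: "fstate \<Rightarrow> real"
  assumes "0 < aA" and "aA < 1"
    and "0 \<le> eps" and "eps < 1"
    and "\<forall>i\<in>{1..N}. 0 < alpha i"
    and "aA + (\<Sum>i=1..N. alpha i) = 1"
    and "\<forall>i\<in>{1..N}. alpha i < 0.4302"
    and "0 < lam" and "0 < R"
    and "stationary aA (residual_centralization aA alpha N) eps \<pi>"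
  shows "selfish_profit lam R aA (residual_centralization aA alpha N) eps \<pi> > aA * lam * R
     \<longleftrightarrow> residual_centralization aA alpha N
           < (aA - eps * (1 - aA)^2) / ((1 - aA) * (1 - eps))"
  using main assms by blast

end
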